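(* Let $H \le G$ be finite groups such that the interval $[H,G]$ is top Boolean. Then $[H,G]$ is $H$-cyclic, i.e. there exists $g \in G$ with $\langle H, g\rangle = G$.
   Context: The interval $[H,G]$ is the lattice of subgroups $K$ with $H \le K \le G$ (meet = intersection, join = generated subgroup). Its coatoms are the maximal elements of $[H,G]$ strictly below $G$. The top interval of $[H,G]$ is $[T,G]$ where $T$ is the intersection (meet) of all coatoms. A finite lattice is Boolean if it is isomorphic to the lattice of all subsets of a finite set; $[H,G]$ is top Boolean if its top interval is Boolean. $[H,G]$ is called $H$-cyclic if there is $g \in G$ with $\langle H,g\rangle = G$. *)

theory Defs
  imports "HOL-Algebra.Algebra"
begin

definition subgroup_interval :: "('a, 'b) monoid_scheme \<Rightarrow> 'a set \<Rightarrow> 'a set set" where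
  "subgroup_interval G H = {K. subgroup K G \<and> H \<subseteq> K}"

definition interval_coatoms :: "('a, 'b) monoid_scheme \<Rightarrow> 'a set \<Rightarrow> 'a set set" where
  "interval_coatoms G H = {K \<in> subgroup_interval G H. K \<noteq> carrier G \<and>
      (\<forall>K' \<in> subgroup_interval G H. K \<subseteq> K' \<longrightarrow> K' = K \<or> K' = carrier G)}"

text \<open>Meet of all coatoms in [H,G] (the empty meet is the top element G).\<close>
definition top_meet :: "('a, 'b) monoid_scheme \<Rightarrow> 'a set \<Rightarrow> 'a set" where
  "top_meet G H = carrier G \<inter> \<Inter> (interval_coatoms G H)"

definition boolean_lattice :: "'a set set \<Rightarrow> bool" where
  "boolean_lattice L \<longleftrightarrow> (\<exists>(S :: nat set) f. finite S \<and> bij_betw f L (Pow S) \<and>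
      (\<forall>x \<in> L. \<forall>y \<in> L. x \<subseteq> y \<longleftrightarrow> f x \<subseteq> f y))"

definition top_boolean :: "('a, 'b) monoid_scheme \<Rightarrow> 'a set \<Rightarrow> bool" where
  "top_boolean G H \<longleftrightarrow> boolean_lattice (subgroup_interval G (top_meet G H))"

end

theory Submission
  imports Defs
begin

lemma prod_notin:
  fixes G (structure)
  assumes "group G" "subgroup M G" "g \<in> carrier G" "x \<in> M" "g \<notin> M"
  shows "g \<otimes>\<^bsub>G\<^esub> x \<notin> M"
proof
  assume h: "g \<otimes>\<^bsub>G\<^esub> x \<in> M"
  interpret group G by fact
  have xc: "x \<in> carrier G" using assms subgroup.subset by blast
  have "(g \<otimes> x) \<otimes> inv x \<in> M" using h assms subgroup.m_closed subgroup.m_inv_closed by metis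
  moreover have "(g \<otimes> x) \<otimes> inv x = g" using xc assms(3) by (simp add: m_assoc)
  ultimately show False using assms by simp
qed

lemma prod_notin2:
  fixes G (structure)
  assumes "group G" "subgroup M G" "x \<in> carrier G" "g \<in> M" "x \<notin> M"
  shows "g \<otimes>\<^bsub>G\<^esub> x \<notin> M"
proof
  assume h: "g \<otimes>\<^bsub>G\<^esub> x \<in> M"
  interpret group G by fact
  have gc: "g \<in> carrier G" using assms subgroup.subset by blast
  have "inv g \<otimes> (g \<otimes> x) \<in> M" using h assms subgroup.m_closed subgroup.m_inv_closed by metis
  moreover have "inv g \<otimes> (g \<otimes> x) = x" using gc assms(3) by (simp add: m_assoc[symmetric])
  ultimately show False using assms by simp
qed

theorem theorem2p4:
  fixes G (structure) and H :: "'a set"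
  assumes "group G" and "finite (carrier G)" and "subgroup H G"
    and "top_boolean G H"
  shows "\<exists>g \<in> carrier G. generate G (insert g H) = carrier G"
proof -
  interpret group G by fact
  define T where "T = top_meet G H"
  define CO where "CO = interval_coatoms G H"
  have Hsub: "H \<subseteq> carrier G" using assms(3) subgroup.subset by blast
  have HT: "H \<subseteq> T" unfolding T_def top_meet_def interval_coatoms_def subgroup_interval_def
    using Hsub by auto
  have COsub: "\<And>M. M \<in> CO \<Longrightarrow> subgroup M G \<and> H \<subseteq> M \<and> M \<noteq> carrier G"
    unfolding CO_def interval_coatoms_def subgroup_interval_def by auto
  have COmax: "\<And>M K. M \<in> CO \<Longrightarrow> subgroup K G \<Longrightarrow> H \<subseteq> K \<Longrightarrow> M \<subseteq> K \<Longrightarrow> K = M \<or> K = carrier G"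
    unfolding CO_def interval_coatoms_def subgroup_interval_def by auto
  have TM: "\<And>M. M \<in> CO \<Longrightarrow> T \<subseteq> M" unfolding T_def top_meet_def CO_def by auto
  obtain S :: "nat set" and f where fS: "finite S" and bij: "bij_betw f (subgroup_interval G T) (Pow S)"
    and ord: "\<forall>x \<in> subgroup_interval G T. \<forall>y \<in> subgroup_interval G T. x \<subseteq> y \<longleftrightarrow> f x \<subseteq> f y"
    using assms(4) unfolding top_boolean_def boolean_lattice_def T_def by blast
  have Tc: "T \<subseteq> carrier G" unfolding T_def top_meet_def by auto
  have Gin: "carrier G \<in> subgroup_interval G T"
    unfolding subgroup_interval_def using Tc subgroup_self by auto
  have inI: "\<And>M. M \<in> CO \<Longrightarrow> M \<in> subgroup_interval G T"
    unfolding subgroup_interval_def using COsub TM by auto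
  obtain K0 where K0: "K0 \<in> subgroup_interval G T" "f K0 = S"
    using bij unfolding bij_betw_def by (metis Pow_top imageE)
  have fG: "f (carrier G) = S"
  proof -
    have "K0 \<subseteq> carrier G" using K0 unfolding subgroup_interval_def using subgroup.subset by blast
    hence "S \<subseteq> f (carrier G)" using ord K0 Gin by auto
    moreover have "f (carrier G) \<subseteq> S" using bij Gin unfolding bij_betw_def by auto
    ultimately show ?thesis by auto
  qed
  have key: "\<And>M0. M0 \<in> CO \<Longrightarrow> \<exists>x \<in> carrier G. x \<notin> M0 \<and> (\<forall>M \<in> CO. M \<noteq> M0 \<longrightarrow> x \<in> M)"
  proof -
    have fM: "\<exists>s \<in> S. f M = S - {s}" if M: "M \<in> CO" for M
    proof -
      have "f M \<noteq> S" using M COsub fG bij inI Gin unfolding bij_betw_def inj_on_def by metis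
      moreover have fMS: "f M \<subseteq> S" using bij inI[OF M] unfolding bij_betw_def by auto
      ultimately obtain s where s: "s \<in> S" "s \<notin> f M" by auto
      obtain K where K: "K \<in> subgroup_interval G T" "f K = S - {s}"
        using bij unfolding bij_betw_def by (metis Diff_subset PowI imageE)
      have "M \<subseteq> K" using ord K inI[OF M] s fMS by auto
      moreover have "subgroup K G" "H \<subseteq> K" using K HT unfolding subgroup_interval_def by auto
      ultimately have "K = M \<or> K = carrier G" using COmax M by blast
      moreover have "K \<noteq> carrier G" using K fG s by auto
      ultimately show ?thesis using K s by auto
    qed
    fix M0 assume M0: "M0 \<in> CO"
    obtain s where s: "s \<in> S" "f M0 = S - {s}" using fM M0 by blast
    obtain Y where Y: "Y \<in> subgroup_interval G T" "f Y = {s}"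
      using bij s unfolding bij_betw_def by (metis PowI empty_subsetI imageE insert_subset)
    have "\<not> Y \<subseteq> M0" using ord Y inI[OF M0] s by auto
    then obtain x where x: "x \<in> Y" "x \<notin> M0" by auto
    have xc: "x \<in> carrier G" using Y x unfolding subgroup_interval_def using subgroup.subset by blast
    have "x \<in> M" if M: "M \<in> CO" "M \<noteq> M0" for M
    proof -
      obtain t where t: "t \<in> S" "f M = S - {t}" using fM M by blast
      have "t \<noteq> s" using t s M bij inI M0 unfolding bij_betw_def inj_on_def by metis
      hence "Y \<subseteq> M" using ord Y inI[OF M(1)] t s by auto
      thus ?thesis using x by auto
    qed
    thus "\<exists>x \<in> carrier G. x \<notin> M0 \<and> (\<forall>M \<in> CO. M \<noteq> M0 \<longrightarrow> x \<in> M)" using xc x by blast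
  qed
  have finCO: "finite CO"
  proof -
    have "CO \<subseteq> Pow (carrier G)" using COsub subgroup.subset by blast
    thus ?thesis using assms(2) finite_subset by blast
  qed
  have ind: "finite C \<Longrightarrow> C \<subseteq> CO \<Longrightarrow> \<exists>g \<in> carrier G. (\<forall>M \<in> C. g \<notin> M) \<and> (\<forall>M \<in> CO - C. g \<in> M)" for C
  proof (induction C rule: finite_induct)
    show "{} \<subseteq> CO \<Longrightarrow> \<exists>g \<in> carrier G. (\<forall>M \<in> {}. g \<notin> M) \<and> (\<forall>M \<in> CO - {}. g \<in> M)"
      using COsub subgroup.one_closed by fastforce
  next
    fix M0 C assume fin: "finite C" and nin: "M0 \<notin> C"
      and IH: "C \<subseteq> CO \<Longrightarrow> \<exists>g \<in> carrier G. (\<forall>M \<in> C. g \<notin> M) \<and> (\<forall>M \<in> CO - C. g \<in> M)"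
      and sub: "insert M0 C \<subseteq> CO"
    obtain g where g: "g \<in> carrier G" "\<forall>M \<in> C. g \<notin> M" "\<forall>M \<in> CO - C. g \<in> M" using IH sub by auto
    obtain x where x: "x \<in> carrier G" "x \<notin> M0" "\<forall>M \<in> CO. M \<noteq> M0 \<longrightarrow> x \<in> M"
      using key sub by blast
    have "g \<otimes> x \<in> carrier G" using g x by simp
    moreover have "\<forall>M \<in> insert M0 C. g \<otimes> x \<notin> M"
    proof
      fix M assume M: "M \<in> insert M0 C"
      show "g \<otimes> x \<notin> M"
      proof (cases "M = M0")
        case True
        have M0C: "M0 \<in> CO" using sub by auto
        have "g \<in> M0" using g(3) M0C nin by blast
        then show ?thesis using prod_notin2[OF assms(1), of M0 x g] COsub[OF M0C] x True by blast
      next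
        case False
        have MC: "M \<in> C" "M \<in> CO" using M False sub by auto
        have "x \<in> M" using x(3) MC False by blast
        then show ?thesis using prod_notin[OF assms(1), of M g x] COsub[OF MC(2)] g MC by blast
      qed
    qed
    moreover have "\<forall>M \<in> CO - insert M0 C. g \<otimes> x \<in> M"
    proof
      fix M assume M: "M \<in> CO - insert M0 C"
      have MM: "M \<in> CO" "M \<notin> C" "M \<noteq> M0" using M by auto
      have "g \<in> M" using MM g(3) by blast
      moreover have "x \<in> M" using MM x(3) by blast
      ultimately show "g \<otimes> x \<in> M" using subgroup.m_closed[OF conjunct1[OF COsub[OF MM(1)]]] by simp
    qed
    ultimately show "\<exists>g \<in> carrier G. (\<forall>M \<in> insert M0 C. g \<notin> M) \<and> (\<forall>M \<in> CO - insert M0 C. g \<in> M)"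
      by blast
  qed
  obtain g where g: "g \<in> carrier G" "\<forall>M \<in> CO. g \<notin> M" using ind[OF finCO] by auto
  define K where "K = generate G (insert g H)"
  have igH: "insert g H \<subseteq> carrier G" using Hsub g(1) by blast
  have Ksg: "subgroup K G" unfolding K_def by (rule generate_is_subgroup[OF igH])
  have gK: "insert g H \<subseteq> K"
  proof
    fix y assume "y \<in> insert g H"
    thus "y \<in> K" unfolding K_def by (rule generate.incl)
  qed
  show ?thesis
  proof (rule bexI[OF _ g(1)], rule ccontr)
    assume ne: "generate G (insert g H) \<noteq> carrier G"
    define A where "A = {K'. subgroup K' G \<and> H \<subseteq> K' \<and> K \<subseteq> K' \<and> K' \<noteq> carrier G}"
    have finA: "finite A"
    proof -
      have "A \<subseteq> Pow (carrier G)" unfolding A_def using subgroup.subset by blast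
      thus ?thesis using assms(2) finite_subset by blast
    qed
    have "K \<noteq> carrier G" using ne unfolding K_def .
    hence "K \<in> A" unfolding A_def using Ksg gK by blast
    then obtain M where M: "M \<in> A" "\<forall>b \<in> A. M \<le> b \<longrightarrow> M = b"
      using finite_has_maximal[OF finA] by blast
    have MA: "subgroup M G" "H \<subseteq> M" "K \<subseteq> M" "M \<noteq> carrier G" using M(1) unfolding A_def by auto
    have "\<forall>K' \<in> subgroup_interval G H. M \<subseteq> K' \<longrightarrow> K' = M \<or> K' = carrier G"
    proof (intro ballI impI)
      fix K' assume K': "K' \<in> subgroup_interval G H" "M \<subseteq> K'"
      show "K' = M \<or> K' = carrier G"
      proof (cases "K' = carrier G")
        case False
        have "K' \<in> A" unfolding A_def using K' False MA unfolding subgroup_interval_def by blast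
        then show ?thesis using M(2) K'(2) by blast
      qed simp
    qed
    hence "M \<in> CO" unfolding CO_def interval_coatoms_def using MA unfolding subgroup_interval_def by blast
    moreover have "g \<in> M" using MA(3) gK by blast
    ultimately show False using g by auto
  qed
qed

end
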